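(* Let $\underline{X}$ be an observation from a distribution $P_{(\theta,\underline{\eta})}$ indexed by $(\theta,\underline{\eta})$ in a parameter space $H$, with real parameter of interest $\theta$ ranging over $[A,B]$ (possibly $A=-\infty$ or $B=+\infty$), and fix $\alpha\in[0,1]$. For an upper one-sided confidence interval $C(\underline{X})=[A,U(\underline{X})]$, define its modification $C^M$ by $$h(\underline{x},\theta_0)=\sup_{(\theta,\underline{\eta})\in H,\ \theta\ge\theta_0}P_{(\theta,\underline{\eta})}\big(U(\underline{X})\le U(\underline{x})\big),\qquad C^M(\underline{x})=\overline{\{\theta_0: h(\underline{x},\theta_0)>\alpha\}}$$ (this is the h-function of the test statistic $U(\underline{x})-\theta_0$ for $H_0:\theta\ge\theta_0$). Let $C_u(\underline{X})=[A,U_u(\underline{X})]$ be an upper one-sided confidence interval of any level, let $C_u^{M1}=C_u^M$, $C_u^{M(k+1)}=(C_u^{Mk})^M$, and $C_u^{M\infty}=\bigcap_{k\ge1}C_u^{Mk}$. Then: (i) $C_u^M(\underline{X})$ is of level $1-\alpha$, i.e. $\inf_{(\theta,\underline{\eta})\in H}P_{(\theta,\underline{\eta})}(\theta\in C_u^M(\underline{X}))\ge1-\alpha$; (ii) $C_u^{M\infty}(\underline{X})=C_u^M(\underline{X})$; (iii) writing $C_u^M(\underline{X})=[A,U_u^M(\underline{X})]$, $C_u^M$ is the smallest interval in the class $\mathcal{C}_u$ of all $1-\alpha$ exact upper one-sided intervals $C(\underline{X})=[A,U(\underline{X})]$ such that $U(\underline{x}')\le U(\underline{x})$ whenever $U_u(\underline{x}')\le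 U_u(\underline{x})$, for all $\underline{x}',\underline{x}$; i.e. for any $C=[A,U]\in\mathcal{C}_u$, $U_u^M(\underline{X})\le U(\underline{X})$.
   Context: For a set $A'$ of parameter values, $\overline{A'}$ denotes the smallest closed simply connected set (closed interval) containing $A'$. An interval $C(\underline{X})$ for $\theta$ is "$1-\alpha$ exact" if $\inf_{(\theta,\underline{\eta})\in H}P_{(\theta,\underline{\eta})}(\theta\in C(\underline{X}))\ge1-\alpha$. *)

theory Defs
  imports "HOL-Probability.Probability"
begin

text \<open>An upper one-sided interval [A, U(x)] is represented by its upper endpoint
  function U :: 'x \<Rightarrow> ereal; A, B :: ereal (possibly infinite).\<close>

definition up_interval :: "ereal \<Rightarrow> ereal \<Rightarrow> real set" where
  "up_interval A u = {t. A \<le> ereal t \<and> ereal t \<le> u}"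

definition interval_hull :: "real set \<Rightarrow> real set" where
  "interval_hull S = closure (convex hull S)"

definition upper_end :: "real set \<Rightarrow> ereal" where
  "upper_end S = Sup (ereal ` S)"

definition hfun :: "(real \<times> 'e \<Rightarrow> 'x measure) \<Rightarrow> (real \<times> 'e) set \<Rightarrow> ('x \<Rightarrow> ereal)
    \<Rightarrow> 'x \<Rightarrow> real \<Rightarrow> ereal" where
  "hfun P H U x t0 =
     (SUP p \<in> {p \<in> H. t0 \<le> fst p}. ereal (measure (P p) {y \<in> space (P p). U y \<le> U x}))"

definition modif :: "(real \<times> 'e \<Rightarrow> 'x measure) \<Rightarrow> (real \<times> 'e) set \<Rightarrow> ereal \<Rightarrow> ereal \<Rightarrow> real
    \<Rightarrow> ('x \<Rightarrow> ereal) \<Rightarrow> 'x \<Rightarrow> real set" where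
  "modif P H A B \<alpha> U x =
     interval_hull {t0. A \<le> ereal t0 \<and> ereal t0 \<le> B \<and> hfun P H U x t0 > ereal \<alpha>}"

definition modU :: "(real \<times> 'e \<Rightarrow> 'x measure) \<Rightarrow> (real \<times> 'e) set \<Rightarrow> ereal \<Rightarrow> ereal \<Rightarrow> real
    \<Rightarrow> ('x \<Rightarrow> ereal) \<Rightarrow> 'x \<Rightarrow> ereal" where
  "modU P H A B \<alpha> U = (\<lambda>x. upper_end (modif P H A B \<alpha> U x))"

text \<open>C^{M infinity}(x) = intersection over k \<ge> 1 of C^{Mk}(x), where
  C^{M(k+1)} is the modification of the interval with endpoint (modU ^^ k) U.\<close>
definition modif_inf :: "(real \<times> 'e \<Rightarrow> 'x measure) \<Rightarrow> (real \<times> 'e) set \<Rightarrow> ereal \<Rightarrow> ereal \<Rightarrow> real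
    \<Rightarrow> ('x \<Rightarrow> ereal) \<Rightarrow> 'x \<Rightarrow> real set" where
  "modif_inf P H A B \<alpha> U x = (\<Inter>k. modif P H A B \<alpha> ((modU P H A B \<alpha> ^^ k) U) x)"

definition exact_ci :: "(real \<times> 'e \<Rightarrow> 'x measure) \<Rightarrow> (real \<times> 'e) set \<Rightarrow> real
    \<Rightarrow> ('x \<Rightarrow> real set) \<Rightarrow> bool" where
  "exact_ci P H \<alpha> C \<longleftrightarrow>
     (INF p \<in> H. ereal (measure (P p) {y \<in> space (P p). fst p \<in> C y})) \<ge> ereal (1 - \<alpha>)"

definition class_Cu :: "(real \<times> 'e \<Rightarrow> 'x measure) \<Rightarrow> (real \<times> 'e) set \<Rightarrow> 'x measure
    \<Rightarrow> ereal \<Rightarrow> real \<Rightarrow> ('x \<Rightarrow> ereal) \<Rightarrow> ('x \<Rightarrow> ereal) \<Rightarrow> bool" where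
  "class_Cu P H S A \<alpha> Uu U \<longleftrightarrow>
     exact_ci P H \<alpha> (\<lambda>y. up_interval A (U y)) \<and>
     (\<forall>x \<in> space S. \<forall>x' \<in> space S. Uu x' \<le> Uu x \<longrightarrow> U x' \<le> U x)"

end

theory Submission
  imports Defs
begin

lemma hfun_mono:
  assumes "\<forall>p\<in>H. measure (P p) {y\<in>space (P p). U y \<le> U x} \<le> measure (P p) {y\<in>space (P p). U' y \<le> U' x'}"
  shows "hfun P H U x t \<le> hfun P H U' x' t"
  unfolding hfun_def
proof (rule SUP_mono)
  fix p assume "p \<in> {p \<in> H. t \<le> fst p}"
  then show "\<exists>m\<in>{p \<in> H. t \<le> fst p}. ereal (measure (P p) {y \<in> space (P p). U y \<le> U x})
     \<le> ereal (measure (P m) {y \<in> space (P m). U' y \<le> U' x'})"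
    using assms by (intro bexI[of _ p]) auto
qed

lemma modif_mono:
  assumes "\<forall>p\<in>H. measure (P p) {y\<in>space (P p). U y \<le> U x} \<le> measure (P p) {y\<in>space (P p). U' y \<le> U' x'}"
  shows "modif P H A B \<alpha> U x \<subseteq> modif P H A B \<alpha> U' x'"
  unfolding modif_def interval_hull_def
  apply (intro closure_mono hull_mono)
  using hfun_mono[OF assms] less_le_trans by blast

lemma modU_mono:
  assumes "\<forall>p\<in>H. measure (P p) {y\<in>space (P p). U y \<le> U x} \<le> measure (P p) {y\<in>space (P p). U' y \<le> U' x'}"
  shows "modU P H A B \<alpha> U x \<le> modU P H A B \<alpha> U' x'"
  unfolding modU_def upper_end_def
  by (intro Sup_subset_mono image_mono modif_mono[OF assms])

lemma downset_meas:
  fixes U :: "'x \<Rightarrow> ereal"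
  assumes U: "U \<in> borel_measurable M" and D: "D \<subseteq> space M"
    and dc: "\<And>y z. y\<in>D \<Longrightarrow> z\<in>space M \<Longrightarrow> U z \<le> U y \<Longrightarrow> z \<in> D"
  shows "D \<in> sets M"
proof (cases "\<exists>y0\<in>D. U y0 = Sup (U ` D)")
  case True
  then obtain y0 where y0: "y0 \<in> D" "U y0 = Sup (U ` D)" by blast
  have "D = {z\<in>space M. U z \<le> Sup (U ` D)}"
  proof safe
    fix z assume "z \<in> D" then show "U z \<le> Sup (U ` D)" by (rule SUP_upper)
  next
    fix z assume "z \<in> space M" "U z \<le> Sup (U ` D)" then show "z \<in> D" using dc y0 by metis
  qed (use D in auto)
  moreover have "{z\<in>space M. U z \<le> Sup (U ` D)} \<in> sets M" using U by measurable
  ultimately show ?thesis by simp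
next
  case False
  have "D = {z\<in>space M. U z < Sup (U ` D)}"
  proof safe
    fix z assume "z \<in> D"
    then show "U z < Sup (U ` D)" using False by (metis SUP_upper order_le_less)
  next
    fix z assume "z \<in> space M" "U z < Sup (U ` D)"
    then show "z \<in> D" using dc by (meson less_SUP_iff order_less_imp_le)
  qed (use D in auto)
  moreover have "{z\<in>space M. U z < Sup (U ` D)} \<in> sets M" using U by measurable
  ultimately show ?thesis by simp
qed

lemma pit:
  fixes U :: "'x \<Rightarrow> ereal"
  assumes M: "prob_space M" and U: "U \<in> borel_measurable M" and D: "D \<subseteq> space M"
    and dc: "\<And>y z. y\<in>D \<Longrightarrow> z\<in>space M \<Longrightarrow> U z \<le> U y \<Longrightarrow> z \<in> D"
    and b: "\<And>y. y\<in>D \<Longrightarrow> measure M {z\<in>space M. U z \<le> U y} \<le> \<alpha>"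
    and a: "0 \<le> \<alpha>"
  shows "measure M D \<le> \<alpha>"
proof (cases "D = {}")
  case True then show ?thesis using a by simp
next
  case ne: False
  interpret prob_space M by fact
  show ?thesis
  proof (cases "\<exists>y0\<in>D. U y0 = Sup (U ` D)")
    case True
    then obtain y0 where y0: "y0 \<in> D" "U y0 = Sup (U ` D)" by blast
    have "D = {z\<in>space M. U z \<le> U y0}"
    proof safe
      fix z assume "z \<in> D" then show "U z \<le> U y0" unfolding y0(2) by (rule SUP_upper)
    next
      fix z assume "z \<in> space M" "U z \<le> U y0" then show "z \<in> D" using dc y0 by metis
    qed (use D in auto)
    then show ?thesis using b[OF y0(1)] by simp
  next
    case False
    obtain f where f: "incseq f" "range f \<subseteq> U ` D" "Sup (U ` D) = (SUP i. f i)"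
      using Sup_countable_SUP[of "U ` D"] ne by auto
    define Af where "Af i = {z\<in>space M. U z \<le> f i}" for i
    have Aset: "range Af \<subseteq> sets M" using U unfolding Af_def by auto
    have Ainc: "incseq Af" using f(1) unfolding Af_def incseq_def by (auto intro: order_trans)
    have "D = (\<Union>i. Af i)"
    proof safe
      fix z assume z: "z \<in> D"
      then have "U z < Sup (U ` D)" using False by (metis SUP_upper order_le_less)
      then obtain i where "U z < f i" using f(3) by (auto simp: less_SUP_iff)
      then show "z \<in> (\<Union>i. Af i)" using z D unfolding Af_def by (auto intro: less_imp_le)
    next
      fix z i assume "z \<in> Af i"
      moreover obtain y where "y \<in> D" "f i = U y" using f(2) by auto
      ultimately show "z \<in> D" using dc unfolding Af_def by auto
    qed
    moreover have "\<And>i. measure M (Af i) \<le> \<alpha>"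
    proof -
      fix i obtain y where "y \<in> D" "f i = U y" using f(2) by auto
      then show "measure M (Af i) \<le> \<alpha>" using b unfolding Af_def by auto
    qed
    ultimately show ?thesis
      using finite_Lim_measure_incseq[OF Aset Ainc]
      by (metis LIMSEQ_le_const2)
  qed
qed

lemma downset_meas2:
  fixes U :: "'x \<Rightarrow> ereal" and V :: "'x \<Rightarrow> 'b::order"
  assumes U: "U \<in> borel_measurable M" and mono: "\<And>y z. U z \<le> U y \<Longrightarrow> V z \<le> V y"
  shows "{z\<in>space M. V z \<le> V x} \<in> sets M"
proof (rule downset_meas[OF U])
  fix y z assume "y \<in> {z \<in> space M. V z \<le> V x}" "z \<in> space M" "U z \<le> U y"
  then have "V z \<le> V y" "V y \<le> V x" using mono by auto
  then show "z \<in> {z \<in> space M. V z \<le> V x}" using \<open>z \<in> space M\<close> by (metis (mono_tags, lifting) mem_Collect_eq order_trans)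
qed auto

theorem theorem5:
  fixes P :: "real \<times> 'e \<Rightarrow> 'x measure" and H :: "(real \<times> 'e) set"
    and S :: "'x measure" and A B :: ereal and \<alpha> :: real and Uu :: "'x \<Rightarrow> ereal"
  assumes "0 \<le> \<alpha>" and "\<alpha> \<le> 1"
    and "\<forall>p \<in> H. prob_space (P p) \<and> sets (P p) = sets S"
    and "\<forall>p \<in> H. A \<le> ereal (fst p) \<and> ereal (fst p) \<le> B"
    and "Uu \<in> borel_measurable S"
  shows "exact_ci P H \<alpha> (modif P H A B \<alpha> Uu)
    \<and> (\<forall>x \<in> space S. modif_inf P H A B \<alpha> Uu x = modif P H A B \<alpha> Uu x)
    \<and> (\<forall>U. class_Cu P H S A \<alpha> Uu U \<longrightarrow> (\<forall>x \<in> space S. modU P H A B \<alpha> Uu x \<le> U x))"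
proof -
  note a = assms
  have PS: "\<And>p. p \<in> H \<Longrightarrow> prob_space (P p)" and SS: "\<And>p. p \<in> H \<Longrightarrow> sets (P p) = sets S"
    using assms(3) by auto
  have SP: "\<And>p. p \<in> H \<Longrightarrow> space (P p) = space S" using SS sets_eq_imp_space_eq by blast
  have UP: "\<And>p. p \<in> H \<Longrightarrow> Uu \<in> borel_measurable (P p)"
    using assms(5) SS measurable_cong_sets by blast
  have hull_sub: "\<And>T. T \<subseteq> closure (convex hull T)"
    by (meson closure_subset hull_subset order_trans)
  have mono0: "\<And>x x'. Uu x' \<le> Uu x \<Longrightarrow> \<forall>p\<in>H. measure (P p) {y\<in>space (P p). Uu y \<le> Uu x'}
      \<le> measure (P p) {y\<in>space (P p). Uu y \<le> Uu x}"
  proof (intro ballI)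
    fix x x' p assume le: "Uu x' \<le> Uu x" and p: "p \<in> H"
    interpret prob_space "P p" using PS[OF p] .
    have m: "{y\<in>space (P p). Uu y \<le> Uu x} \<in> sets (P p)" using UP[OF p] by measurable
    have "{y\<in>space (P p). Uu y \<le> Uu x'} \<subseteq> {y\<in>space (P p). Uu y \<le> Uu x}"
      using order.trans[OF _ le] by blast
    then show "measure (P p) {y\<in>space (P p). Uu y \<le> Uu x'} \<le> measure (P p) {y\<in>space (P p). Uu y \<le> Uu x}"
      using m by (rule finite_measure_mono)
  qed
  have part1: "exact_ci P H \<alpha> (modif P H A B \<alpha> Uu)"
    unfolding exact_ci_def
  proof (rule INF_greatest)
    fix p assume p: "p \<in> H"
    interpret prob_space "P p" using PS[OF p] .
    define N where "N = {y\<in>space (P p). fst p \<notin> modif P H A B \<alpha> Uu y}"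
    have dc: "\<And>y z. y\<in>N \<Longrightarrow> z\<in>space (P p) \<Longrightarrow> Uu z \<le> Uu y \<Longrightarrow> z \<in> N"
    proof -
      fix y z assume "y\<in>N" "z\<in>space (P p)" "Uu z \<le> Uu y"
      then have "modif P H A B \<alpha> Uu z \<subseteq> modif P H A B \<alpha> Uu y" by (intro modif_mono mono0)
      then show "z \<in> N" using \<open>y\<in>N\<close> \<open>z\<in>space (P p)\<close> unfolding N_def by blast
    qed
    have Nm: "N \<in> sets (P p)"
      by (rule downset_meas[OF UP[OF p] _ dc]) (auto simp: N_def)
    have "measure (P p) N \<le> \<alpha>"
    proof (rule pit[OF PS[OF p] UP[OF p] _ dc _ a(1)])
      show "N \<subseteq> space (P p)" by (auto simp: N_def)
    next
      fix y assume y: "y \<in> N"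
      have AB: "A \<le> ereal (fst p) \<and> ereal (fst p) \<le> B" using assms(4) p by blast
      have h1: "\<not> hfun P H Uu y (fst p) > ereal \<alpha>"
      proof
        assume "hfun P H Uu y (fst p) > ereal \<alpha>"
        then have "fst p \<in> {t0. A \<le> ereal t0 \<and> ereal t0 \<le> B \<and> hfun P H Uu y t0 > ereal \<alpha>}"
          using AB by simp
        then have "fst p \<in> modif P H A B \<alpha> Uu y"
          unfolding modif_def interval_hull_def using hull_sub by (rule subsetD[rotated])
        then show False using y by (simp add: N_def)
      qed
      have h2: "ereal (measure (P p) {z\<in>space (P p). Uu z \<le> Uu y}) \<le> hfun P H Uu y (fst p)"
        unfolding hfun_def using p by (intro SUP_upper) auto
      have h3: "hfun P H Uu y (fst p) \<le> ereal \<alpha>" using h1 by (simp only: not_less)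
      have "ereal (measure (P p) {z\<in>space (P p). Uu z \<le> Uu y}) \<le> ereal \<alpha>"
        using h2 h3 by (rule order_trans)
      then show "measure (P p) {z\<in>space (P p). Uu z \<le> Uu y} \<le> \<alpha>" by simp
    qed
    moreover have "{y \<in> space (P p). fst p \<in> modif P H A B \<alpha> Uu y} = space (P p) - N"
      unfolding N_def by auto
    ultimately show "ereal (1 - \<alpha>) \<le> ereal (measure (P p) {y \<in> space (P p). fst p \<in> modif P H A B \<alpha> Uu y})"
      using prob_compl[OF Nm] by simp
  qed
  have iter: "\<And>x y. Uu y \<le> Uu x \<Longrightarrow> ((modU P H A B \<alpha> ^^ k) Uu) y \<le> ((modU P H A B \<alpha> ^^ k) Uu) x" for k
  proof (induction k)
    case 0 then show ?case by simp
  next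
    case (Suc k)
    let ?V = "(modU P H A B \<alpha> ^^ k) Uu"
    have "\<forall>p\<in>H. measure (P p) {z\<in>space (P p). ?V z \<le> ?V y} \<le> measure (P p) {z\<in>space (P p). ?V z \<le> ?V x}"
    proof
      fix p assume p: "p \<in> H"
      have "{z\<in>space (P p). ?V z \<le> ?V x} \<in> sets (P p)"
        by (rule downset_meas2[OF UP[OF p]]) (rule Suc.IH)
      moreover have "{z\<in>space (P p). ?V z \<le> ?V y} \<subseteq> {z\<in>space (P p). ?V z \<le> ?V x}"
        using order.trans[OF _ Suc.IH[OF Suc.prems]] by blast
      ultimately show "measure (P p) {z\<in>space (P p). ?V z \<le> ?V y} \<le> measure (P p) {z\<in>space (P p). ?V z \<le> ?V x}"
        using PS[OF p] by (intro finite_measure.finite_measure_mono prob_space.finite_measure)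
    qed
    note mm = modU_mono[OF this]
    show ?case using mm by simp
  qed
  have sub: "modif P H A B \<alpha> Uu x \<subseteq> modif P H A B \<alpha> ((modU P H A B \<alpha> ^^ k) Uu) x" for x k
  proof (rule modif_mono, rule ballI)
    let ?V = "(modU P H A B \<alpha> ^^ k) Uu"
    fix p assume p: "p \<in> H"
    have "{z\<in>space (P p). ?V z \<le> ?V x} \<in> sets (P p)"
      by (rule downset_meas2[OF UP[OF p]]) (rule iter)
    moreover have "{z\<in>space (P p). Uu z \<le> Uu x} \<subseteq> {z\<in>space (P p). ?V z \<le> ?V x}"
      using iter by blast
    ultimately show "measure (P p) {z\<in>space (P p). Uu z \<le> Uu x} \<le> measure (P p) {z\<in>space (P p). ?V z \<le> ?V x}"
      using PS[OF p] by (intro finite_measure.finite_measure_mono prob_space.finite_measure)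
  qed
  have part2: "\<forall>x \<in> space S. modif_inf P H A B \<alpha> Uu x = modif P H A B \<alpha> Uu x"
  proof
    fix x
    show "modif_inf P H A B \<alpha> Uu x = modif P H A B \<alpha> Uu x"
      unfolding modif_inf_def
    proof (rule antisym)
      show "(\<Inter>k. modif P H A B \<alpha> ((modU P H A B \<alpha> ^^ k) Uu) x) \<subseteq> modif P H A B \<alpha> Uu x"
        by (metis (no_types, lifting) INT_lower UNIV_I funpow_0)
    qed (use sub in blast)
  qed
  have part3: "\<forall>U. class_Cu P H S A \<alpha> Uu U \<longrightarrow> (\<forall>x \<in> space S. modU P H A B \<alpha> Uu x \<le> U x)"
  proof (intro allI impI ballI)
    fix U x assume C: "class_Cu P H S A \<alpha> Uu U" and x: "x \<in> space S"
    have ex: "\<And>p. p \<in> H \<Longrightarrow> ereal (1 - \<alpha>) \<le> ereal (measure (P p) {y \<in> space (P p). fst p \<in> up_interval A (U y)})"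
      using C unfolding class_Cu_def exact_ci_def by (meson INF_lower order_trans)
    have mon: "\<And>y. y \<in> space S \<Longrightarrow> Uu y \<le> Uu x \<Longrightarrow> U y \<le> U x"
      using C x unfolding class_Cu_def by blast
    define T where "T = {t0. A \<le> ereal t0 \<and> ereal t0 \<le> B \<and> hfun P H Uu x t0 > ereal \<alpha>}"
    have T: "ereal t \<le> U x" if t: "t \<in> T" for t
    proof (rule ccontr)
      assume nt: "\<not> ereal t \<le> U x"
      have "hfun P H Uu x t > ereal \<alpha>" using t by (simp add: T_def)
      then obtain p where p: "p \<in> H" "t \<le> fst p"
        and gt: "ereal \<alpha> < ereal (measure (P p) {y\<in>space (P p). Uu y \<le> Uu x})"
        unfolding hfun_def by (auto simp: less_SUP_iff)
      interpret prob_space "P p" using PS[OF p(1)] .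
      define Bs where "Bs = {y\<in>space (P p). Uu y \<le> Uu x}"
      have Bm: "Bs \<in> sets (P p)" using UP[OF p(1)] by (simp add: Bs_def)
      have gt': "\<alpha> < measure (P p) Bs" using gt by (simp add: Bs_def)
      have le1: "measure (P p) Bs \<le> 1" by simp
      have subC: "{y \<in> space (P p). fst p \<in> up_interval A (U y)} \<subseteq> space (P p) - Bs"
      proof
        fix y assume y: "y \<in> {y \<in> space (P p). fst p \<in> up_interval A (U y)}"
        show "y \<in> space (P p) - Bs"
        proof (rule ccontr)
          assume "y \<notin> space (P p) - Bs"
          then have "Uu y \<le> Uu x" "y \<in> space S" using y SP[OF p(1)] by (auto simp: Bs_def)
          then have "U y \<le> U x" by (rule mon[rotated])
          moreover have "ereal (fst p) \<le> U y" using y by (simp add: up_interval_def)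
          moreover have "ereal t \<le> ereal (fst p)" using p by simp
          ultimately show False using nt by (meson order_trans)
        qed
      qed
      have "measure (P p) {y \<in> space (P p). fst p \<in> up_interval A (U y)} < 1 - \<alpha>"
      proof (cases "{y \<in> space (P p). fst p \<in> up_interval A (U y)} \<in> sets (P p)")
        case True
        then have "measure (P p) {y \<in> space (P p). fst p \<in> up_interval A (U y)} \<le> measure (P p) (space (P p) - Bs)"
          using subC Bm by (intro finite_measure_mono) auto
        also have "\<dots> = 1 - measure (P p) Bs" using prob_compl[OF Bm] by simp
        finally show ?thesis using gt' by simp
      next
        case False
        have "\<alpha> < 1" using gt' le1 by linarith
        then show ?thesis using False by (simp add: measure_notin_sets)
      qed
      then show False using ex[OF p(1)] by simp
    qed
    have cases3: "{t. ereal t \<le> U x} = UNIV \<or> {t. ereal t \<le> U x} = {} \<or> (\<exists>r. {t. ereal t \<le> U x} = {..r})"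
      by (cases "U x") auto
    have K: "closure (convex hull T) \<subseteq> {t. ereal t \<le> U x}"
    proof (rule closure_minimal)
      show "convex hull T \<subseteq> {t. ereal t \<le> U x}"
      proof (rule hull_minimal)
        show "T \<subseteq> {t. ereal t \<le> U x}" using T by blast
        show "convex {t. ereal t \<le> U x}"
          using cases3 by (auto simp: convex_real_interval)
      qed
      show "closed {t. ereal t \<le> U x}"
        using cases3 by auto
    qed
    show "modU P H A B \<alpha> Uu x \<le> U x"
      unfolding modU_def upper_end_def modif_def interval_hull_def T_def[symmetric]
      using K by (auto intro!: Sup_least)
  qed
  show ?thesis using part1 part2 part3 by blast
qed

end
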